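(* With the setting of the context, assume additionally that $\mathbf{x}_i^+\ne\mathbf{x}_j^-$ for all $i,j$. Let $\mathbf{s}_0\in\mathbb{R}^d$ and fix $j_0\in\{1,\dots,M^-\}$ with $U_{j_0}(\mathbf{s}_0)<0$. For $i\in\{1,\dots,M^+\}$, $j\in\{1,\dots,M^-\}$ let $$\bar\rho_{ij} := \frac{\beta_j - \|\mathbf{s}_0-\mathbf{x}_j^-\|^2 + \|\mathbf{s}_0-\mathbf{x}_i^+\|^2}{2\|\mathbf{x}_j^- - \mathbf{x}_i^+\|},\qquad \beta_j = \tfrac{1}{\gamma}\Big(\log\alpha_j^- - \log\textstyle\sum_{i=1}^{M^+}\alpha_i^+\Big),$$ and define $r_u := \min_{i}\bar\rho_{i j_0}$ and $r_u^* := \min_{i}\max_{j}\bar\rho_{ij}$ (with $i$ ranging over $\{1,\dots,M^+\}$ and $j$ over $\{1,\dots,M^-\}$). Then $r_u\le r_u^*$, and every point $\mathbf{y}\in\mathbb{R}^d$ with $\|\mathbf{y}-\mathbf{s}_0\|<r_u^*$ (in particular every $\mathbf{y}$ with $\|\mathbf{y}-\mathbf{s}_0\|<r_u$) satisfies $F(\mathbf{y})<0$.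
   Context: Let $M^+, M^- \ge 1$; positive support vectors $\mathbf{x}_1^+,\dots,\mathbf{x}_{M^+}^+\in\mathbb{R}^d$ with weights $\alpha_i^+>0$; negative support vectors $\mathbf{x}_1^-,\dots,\mathbf{x}_{M^-}^-\in\mathbb{R}^d$ with weights $\alpha_j^->0$. Kernel: $k(\mathbf{x},\mathbf{y}) = \eta \exp(-\gamma\|\mathbf{x}-\mathbf{y}\|^2)$ with constants $\eta,\gamma>0$, Euclidean norm. Score function: $F(\mathbf{x}) = \sum_{i=1}^{M^+}\alpha_i^+ k(\mathbf{x}_i^+,\mathbf{x}) - \sum_{j=1}^{M^-}\alpha_j^- k(\mathbf{x}_j^-,\mathbf{x})$. $\mathbf{x}_*^+(\mathbf{x})$ denotes a positive support vector closest to $\mathbf{x}$. For $j\in\{1,\dots,M^-\}$, $U_j(\mathbf{x}) := k(\mathbf{x},\mathbf{x}_*^+(\mathbf{x}))\sum_{i=1}^{M^+}\alpha_i^+ - \alpha_j^- k(\mathbf{x},\mathbf{x}_j^-)$. A point $\mathbf{x}$ is free if $F(\mathbf{x})<0$. *)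

theory Defs
  imports "HOL-Analysis.Analysis"
begin

definition kern :: "real \<Rightarrow> real \<Rightarrow> 'a::real_normed_vector \<Rightarrow> 'a \<Rightarrow> real" where
  "kern eta gamma x y = eta * exp (- gamma * (norm (x - y))\<^sup>2)"

definition score :: "real \<Rightarrow> real \<Rightarrow> nat \<Rightarrow> (nat \<Rightarrow> 'a::real_normed_vector) \<Rightarrow> (nat \<Rightarrow> real)
    \<Rightarrow> nat \<Rightarrow> (nat \<Rightarrow> 'a) \<Rightarrow> (nat \<Rightarrow> real) \<Rightarrow> 'a \<Rightarrow> real" where
  "score eta gamma Mp xp ap Mn xn an x =
     (\<Sum>i=1..Mp. ap i * kern eta gamma (xp i) x) - (\<Sum>j=1..Mn. an j * kern eta gamma (xn j) x)"

definition closest_pos :: "nat \<Rightarrow> (nat \<Rightarrow> 'a::real_normed_vector) \<Rightarrow> 'a \<Rightarrow> 'a" where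
  "closest_pos Mp xp x = xp (SOME i. i \<in> {1..Mp} \<and> (\<forall>i'\<in>{1..Mp}. norm (x - xp i) \<le> norm (x - xp i')))"

definition Ufun :: "real \<Rightarrow> real \<Rightarrow> nat \<Rightarrow> (nat \<Rightarrow> 'a::real_normed_vector) \<Rightarrow> (nat \<Rightarrow> real)
    \<Rightarrow> (nat \<Rightarrow> 'a) \<Rightarrow> (nat \<Rightarrow> real) \<Rightarrow> nat \<Rightarrow> 'a \<Rightarrow> real" where
  "Ufun eta gamma Mp xp ap xn an j x =
     kern eta gamma x (closest_pos Mp xp x) * (\<Sum>i=1..Mp. ap i) - an j * kern eta gamma x (xn j)"

definition beta :: "real \<Rightarrow> nat \<Rightarrow> (nat \<Rightarrow> real) \<Rightarrow> (nat \<Rightarrow> real) \<Rightarrow> nat \<Rightarrow> real" where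
  "beta gamma Mp ap an j = (1 / gamma) * (ln (an j) - ln (\<Sum>i=1..Mp. ap i))"

definition rho_bar :: "real \<Rightarrow> nat \<Rightarrow> (nat \<Rightarrow> 'a::real_normed_vector) \<Rightarrow> (nat \<Rightarrow> real)
    \<Rightarrow> (nat \<Rightarrow> 'a) \<Rightarrow> (nat \<Rightarrow> real) \<Rightarrow> 'a \<Rightarrow> nat \<Rightarrow> nat \<Rightarrow> real" where
  "rho_bar gamma Mp xp ap xn an s0 i j =
     (beta gamma Mp ap an j - (norm (s0 - xn j))\<^sup>2 + (norm (s0 - xp i))\<^sup>2) / (2 * norm (xn j - xp i))"

end

theory Submission
  imports Defs
begin
lemma diffid: fixes y sz a b :: "'a::euclidean_space"
  shows "(norm (y - b))\<^sup>2 - (norm (y - a))\<^sup>2 = (norm (sz - b))\<^sup>2 - (norm (sz - a))\<^sup>2 + 2 * inner (y - sz) (a - b)"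
  by (simp add: power2_norm_eq_inner inner_diff_left inner_diff_right inner_commute algebra_simps)

lemma key:
  fixes y sz a b :: "'a::euclidean_space" and A c g bt :: real
  assumes "a \<noteq> b" "g > 0" "A > 0" "c > 0" "bt = (1/g) * (ln c - ln A)"
    and "norm (y - sz) < (bt - (norm (sz - b))\<^sup>2 + (norm (sz - a))\<^sup>2) / (2 * norm (b - a))"
  shows "A * exp (- g * (norm (a - y))\<^sup>2) < c * exp (- g * (norm (b - y))\<^sup>2)"
proof -
  have nz: "norm (b - a) > 0" using assms(1) by simp
  have "inner (y - sz) (a - b) \<le> norm (y - sz) * norm (a - b)" by (rule norm_cauchy_schwarz)
  also have "norm (a - b) = norm (b - a)" by (rule norm_minus_commute)
  finally have cs: "inner (y - sz) (a - b) \<le> norm (y - sz) * norm (b - a)" .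
  have "norm (y - sz) * (2 * norm (b - a)) < bt - (norm (sz - b))\<^sup>2 + (norm (sz - a))\<^sup>2"
    using assms(6) nz by (simp add: pos_less_divide_eq)
  hence D: "(norm (y - b))\<^sup>2 - (norm (y - a))\<^sup>2 < bt" using cs diffid[of y b a sz] by linarith
  have "g * ((norm (y - b))\<^sup>2 - (norm (y - a))\<^sup>2) < g * bt" using D assms(2) by simp
  also have "g * bt = ln c - ln A" using assms(2,5) by simp
  finally have "ln A - g * (norm (y - a))\<^sup>2 < ln c - g * (norm (y - b))\<^sup>2" by (simp add: algebra_simps)
  hence "exp (ln A - g * (norm (y - a))\<^sup>2) < exp (ln c - g * (norm (y - b))\<^sup>2)" by simp
  hence "exp (ln A + (- g * (norm (y - a))\<^sup>2)) < exp (ln c + (- g * (norm (y - b))\<^sup>2))" by simp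
  hence "exp (ln A) * exp (- g * (norm (y - a))\<^sup>2) < exp (ln c) * exp (- g * (norm (y - b))\<^sup>2)"
    by (simp only: exp_add)
  thus ?thesis using assms(3,4) by (simp add: norm_minus_commute)
qed

theorem corollary2:
  fixes eta gamma :: real and Mp Mn :: nat
    and xp xn :: "nat \<Rightarrow> 'a::euclidean_space" and ap an :: "nat \<Rightarrow> real"
    and s0 :: 'a and j0 :: nat
  assumes "eta > 0" and "gamma > 0" and "Mp \<ge> 1" and "Mn \<ge> 1"
    and "\<forall>i\<in>{1..Mp}. ap i > 0" and "\<forall>j\<in>{1..Mn}. an j > 0"
    and "\<forall>i\<in>{1..Mp}. \<forall>j\<in>{1..Mn}. xp i \<noteq> xn j"
    and "j0 \<in> {1..Mn}"
    and "Ufun eta gamma Mp xp ap xn an j0 s0 < 0"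
  shows "Min ((\<lambda>i. rho_bar gamma Mp xp ap xn an s0 i j0) ` {1..Mp})
           \<le> Min ((\<lambda>i. Max ((\<lambda>j. rho_bar gamma Mp xp ap xn an s0 i j) ` {1..Mn})) ` {1..Mp})
       \<and> (\<forall>y. norm (y - s0) < Min ((\<lambda>i. Max ((\<lambda>j. rho_bar gamma Mp xp ap xn an s0 i j) ` {1..Mn})) ` {1..Mp})
              \<longrightarrow> score eta gamma Mp xp ap Mn xn an y < 0)
       \<and> (\<forall>y. norm (y - s0) < Min ((\<lambda>i. rho_bar gamma Mp xp ap xn an s0 i j0) ` {1..Mp})
              \<longrightarrow> score eta gamma Mp xp ap Mn xn an y < 0)"
proof -
  let ?A = "\<Sum>i=1..Mp. ap i"
  let ?r = "\<lambda>i j. rho_bar gamma Mp xp ap xn an s0 i j"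
  let ?rs = "Min ((\<lambda>i. Max ((\<lambda>j. ?r i j) ` {1..Mn})) ` {1..Mp})"
  let ?ru = "Min ((\<lambda>i. ?r i j0) ` {1..Mp})"
  have Apos: "?A > 0" using assms(3,5) by (intro sum_pos) auto
  have P1: "?ru \<le> ?rs"
  proof -
    have "?rs \<in> (\<lambda>i. Max ((\<lambda>j. ?r i j) ` {1..Mn})) ` {1..Mp}"
      using assms(3) by (intro Min_in) auto
    then obtain i where i: "i \<in> {1..Mp}" "?rs = Max ((\<lambda>j. ?r i j) ` {1..Mn})"
      by blast
    have "?ru \<le> ?r i j0" using i(1) by (intro Min_le) auto
    also have "\<dots> \<le> Max ((\<lambda>j. ?r i j) ` {1..Mn})" using assms(8) by (intro Max_ge) auto
    finally show ?thesis using i(2) by simp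
  qed
  have P2: "\<forall>y. norm (y - s0) < ?rs \<longrightarrow> score eta gamma Mp xp ap Mn xn an y < 0"
  proof (intro allI impI)
    fix y assume hy: "norm (y - s0) < ?rs"
    have "Min ((\<lambda>i. norm (y - xp i)) ` {1..Mp}) \<in> (\<lambda>i. norm (y - xp i)) ` {1..Mp}"
      using assms(3) by (intro Min_in) auto
    then obtain i where i: "i \<in> {1..Mp}" "norm (y - xp i) = Min ((\<lambda>i. norm (y - xp i)) ` {1..Mp})"
      by (metis (no_types, lifting) imageE)
    have imin: "\<And>i'. i' \<in> {1..Mp} \<Longrightarrow> norm (y - xp i) \<le> norm (y - xp i')"
      using i(2) by simp
    have "?rs \<le> Max ((\<lambda>j. ?r i j) ` {1..Mn})" using i(1) by (intro Min_le) auto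
    moreover have "Max ((\<lambda>j. ?r i j) ` {1..Mn}) \<in> (\<lambda>j. ?r i j) ` {1..Mn}"
      using assms(4) by (intro Max_in) auto
    moreover obtain j where j: "j \<in> {1..Mn}" "Max ((\<lambda>j. ?r i j) ` {1..Mn}) = ?r i j"
      using calculation(2) by blast
    ultimately have hj: "norm (y - s0) < ?r i j" using hy by linarith
    have K: "?A * exp (- gamma * (norm (xp i - y))\<^sup>2) < an j * exp (- gamma * (norm (xn j - y))\<^sup>2)"
      apply (rule key[where sz=s0 and bt="beta gamma Mp ap an j"])
      using assms(2,6,7) i(1) j(1) Apos hj by (auto simp: beta_def rho_bar_def)
    have S1: "(\<Sum>i'=1..Mp. ap i' * kern eta gamma (xp i') y) \<le> (\<Sum>i'=1..Mp. ap i' * (eta * exp (- gamma * (norm (xp i - y))\<^sup>2)))"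
    proof (rule sum_mono)
      fix i' assume i': "i' \<in> {1..Mp}"
      have "norm (xp i - y) \<le> norm (xp i' - y)" using imin[OF i'] by (simp add: norm_minus_commute)
      hence "(norm (xp i - y))\<^sup>2 \<le> (norm (xp i' - y))\<^sup>2" by (simp add: power_mono)
      hence "exp (- gamma * (norm (xp i' - y))\<^sup>2) \<le> exp (- gamma * (norm (xp i - y))\<^sup>2)"
        using assms(2) by simp
      thus "ap i' * kern eta gamma (xp i') y \<le> ap i' * (eta * exp (- gamma * (norm (xp i - y))\<^sup>2))"
        using assms(1,5) i' unfolding kern_def by (intro mult_left_mono) (auto simp: less_imp_le)
    qed
    also have "\<dots> = eta * (?A * exp (- gamma * (norm (xp i - y))\<^sup>2))"
      by (simp add: sum_distrib_left sum_distrib_right mult_ac)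
    also have "\<dots> < eta * (an j * exp (- gamma * (norm (xn j - y))\<^sup>2))"
      using K assms(1) by simp
    also have "\<dots> = an j * kern eta gamma (xn j) y" by (simp add: kern_def)
    also have "\<dots> \<le> (\<Sum>j'=1..Mn. an j' * kern eta gamma (xn j') y)"
      using j(1) assms(1,6) by (intro member_le_sum) (auto simp: kern_def less_imp_le)
    finally show "score eta gamma Mp xp ap Mn xn an y < 0" by (simp add: score_def)
  qed
  show ?thesis using P1 P2 by force
qed

end
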